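(* (1) Two elements of the hypoplactic monoid ${\mathsf{hypo}}$ lie in the same connected component of $K({\mathsf{hypo}})$ if and only if they have the same evaluation; i.e. $\sim^*$ coincides with $\equiv_{\mathrm{ev}}$ in ${\mathsf{hypo}}$. (2) For every $n\ge 1$, every connected component of $K({\mathsf{hypo}}_n)$ has diameter at most $n-1$, and some connected component of $K({\mathsf{hypo}}_n)$ has diameter exactly $n-1$. Hence the maximum diameter of a connected component of $K({\mathsf{hypo}}_n)$ is $n-1$.
   Context: Let $\mathcal{A}=\{1<2<3<\cdots\}$ be the ordered alphabet of positive integers and $\mathcal{A}_n=\{1<2<\cdots<n\}$. For a monoid $M$ and $s,t\in M$, write $s\sim t$ if there exist $x,y\in M$ with $s=xy$ and $t=yx$ (a cyclic shift); $\sim^*$ is the reflexive–transitive closure of $\sim$. The cyclic shift graph $K(M)$ is the undirected graph with vertex set $M$ and an edge between $s$ and $t$ iff $s\sim t$; its connected components are the $\sim^*$-classes, and distances/diameters are graph distances in $K(M)$. The evaluation of a word $w$ is the tuple $(|w|_a)_{a}$ giving the number of occurrences of each letter $a$; all monoids considered are defined by presentations whose defining relations preserve evaluation, so the evaluation of an element is well defined, and $s\equiv_{\mathrm{ev}} t$ means $s$ and $t$ have the same evaluation. The hypoplactic monoid ${\mathsf{hypo}}$ is $\mathcal{A}^*$ modulo the congruence generated by the relations $acb=cab$ ($a\le b<c$), $bac=bca$ ($a<b\le c$), $cadb=acbd$ ($a\le b<c\le d$), and $bdac=dbca$ ($a<b\le c<d$), where $a,b,c,d$ range over letters. ${\mathsf{hypo}}_n$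 is the monoid defined by the same relations restricted to letters of $\mathcal{A}_n$, i.e. a quotient of $\mathcal{A}_n^*$. *)

theory Defs
  imports Main "HOL-Library.Extended_Nat"
begin

text \<open>Words are lists of natural numbers; the alphabet is a set of letters
  (the positive integers for hypo, the set {1..n} for hypo_n).\<close>

definition posAlph :: "nat set" where "posAlph = {a. 1 \<le> a}"

inductive hypo_rule :: "nat list \<Rightarrow> nat list \<Rightarrow> bool" where
  r1: "a \<le> b \<Longrightarrow> b < c \<Longrightarrow> hypo_rule [a, c, b] [c, a, b]"
| r2: "a < b \<Longrightarrow> b \<le> c \<Longrightarrow> hypo_rule [b, a, c] [b, c, a]"
| r3: "a \<le> b \<Longrightarrow> b < c \<Longrightarrow> c \<le> d \<Longrightarrow> hypo_rule [c, a, d, b] [a, c, b, d]"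
| r4: "a < b \<Longrightarrow> b \<le> c \<Longrightarrow> c < d \<Longrightarrow> hypo_rule [b, d, a, c] [d, b, c, a]"

definition hstep :: "nat set \<Rightarrow> nat list \<Rightarrow> nat list \<Rightarrow> bool" where
  "hstep A u v \<longleftrightarrow> set u \<subseteq> A \<and> set v \<subseteq> A \<and>
     (\<exists>p q l r. u = p @ l @ q \<and> v = p @ r @ q \<and> (hypo_rule l r \<or> hypo_rule r l))"

definition hcong :: "nat set \<Rightarrow> nat list \<Rightarrow> nat list \<Rightarrow> bool" where
  "hcong A u v \<longleftrightarrow> set u \<subseteq> A \<and> set v \<subseteq> A \<and> (hstep A)\<^sup>*\<^sup>* u v"

definition cls :: "nat set \<Rightarrow> nat list \<Rightarrow> nat list set" where
  "cls A w = {v. hcong A w v}"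

definition Mon :: "nat set \<Rightarrow> nat list set set" where
  "Mon A = {cls A w | w. set w \<subseteq> A}"

definition mmult :: "nat set \<Rightarrow> nat list set \<Rightarrow> nat list set \<Rightarrow> nat list set" where
  "mmult A X Y = {w. \<exists>x\<in>X. \<exists>y\<in>Y. hcong A (x @ y) w}"

definition cshift :: "nat set \<Rightarrow> nat list set \<Rightarrow> nat list set \<Rightarrow> bool" where
  "cshift A s t \<longleftrightarrow> s \<in> Mon A \<and> t \<in> Mon A \<and>
     (\<exists>x\<in>Mon A. \<exists>y\<in>Mon A. s = mmult A x y \<and> t = mmult A y x)"

definition evalw :: "nat list \<Rightarrow> nat \<Rightarrow> nat" where
  "evalw w = (\<lambda>a. count_list w a)"

definition ev_equiv :: "nat list set \<Rightarrow> nat list set \<Rightarrow> bool" where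
  "ev_equiv s t \<longleftrightarrow> (\<exists>u\<in>s. \<exists>v\<in>t. evalw u = evalw v)"

text \<open>Graph distance in K(M) between connected vertices.\<close>
definition kdist :: "nat set \<Rightarrow> nat list set \<Rightarrow> nat list set \<Rightarrow> nat" where
  "kdist A s t = (LEAST k. (cshift A ^^ k) s t)"

text \<open>Connected components of K(M) (cshift is symmetric).\<close>
definition components :: "nat set \<Rightarrow> nat list set set set" where
  "components A = {{t \<in> Mon A. (cshift A)\<^sup>*\<^sup>* s t} | s. s \<in> Mon A}"

definition diam :: "nat set \<Rightarrow> nat list set set \<Rightarrow> enat" where
  "diam A C = (SUP p \<in> C \<times> C. enat (kdist A (fst p) (snd p)))"

end

theory Submission
  imports Defs "HOL-Library.Multiset"
begin


fun bef :: "nat list \<Rightarrow> nat \<Rightarrow> nat \<Rightarrow> bool" where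
  "bef [] x y = False"
| "bef (c # w) x y = ((c = x \<and> y \<in> set w) \<or> bef w x y)"

lemma bef_append[simp]: "bef (u @ v) x y = (bef u x y \<or> (x \<in> set u \<and> y \<in> set v) \<or> bef v x y)"
  by (induction u) auto

lemma bef_in: "bef w x y \<Longrightarrow> x \<in> set w \<and> y \<in> set w"
  by (induction w) auto

lemma bef_filter: "P x \<Longrightarrow> P y \<Longrightarrow> bef (filter P w) x y = bef w x y"
  by (induction w) auto

definition consec :: "nat set \<Rightarrow> nat \<Rightarrow> nat \<Rightarrow> bool" where
  "consec S x y \<longleftrightarrow> x \<in> S \<and> y \<in> S \<and> x < y \<and> (\<forall>z\<in>S. \<not> (x < z \<and> z < y))"

definition InvW :: "nat list \<Rightarrow> nat set" where
  "InvW w = {x. \<exists>y. consec (set w) x y \<and> bef w y x}"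

definition sim :: "nat list \<Rightarrow> nat list \<Rightarrow> bool" where
  "sim u v \<longleftrightarrow> mset u = mset v \<and> InvW u = InvW v"

lemma consec_unique: "consec S x y \<Longrightarrow> consec S x y' \<Longrightarrow> y = y'"
  unfolding consec_def by (metis linorder_neqE_nat)

lemma simI:
  assumes "mset u = mset v"
    and "\<And>a b. a \<in> set u \<Longrightarrow> b \<in> set u \<Longrightarrow> a < b \<Longrightarrow> (\<forall>z\<in>set u. \<not> (a < z \<and> z < b)) \<Longrightarrow> bef u b a = bef v b a"
  shows "sim u v"
proof -
  have s: "set u = set v" using assms(1) by (metis set_mset_mset)
  show ?thesis unfolding sim_def InvW_def
    using assms s by (auto simp: consec_def)
qed

lemma sim_bef: "sim u v \<Longrightarrow> consec (set u) a b \<Longrightarrow> bef u b a = bef v b a"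
proof -
  assume s: "sim u v" and c: "consec (set u) a b"
  have se: "set u = set v" using s unfolding sim_def by (metis set_mset_mset)
  have "a \<in> InvW u \<longleftrightarrow> bef u b a" unfolding InvW_def using c consec_unique by blast
  moreover have "a \<in> InvW v \<longleftrightarrow> bef v b a" unfolding InvW_def using c se consec_unique by (auto, metis)
  ultimately show ?thesis using s unfolding sim_def by simp
qed

lemma sim_refl[simp]: "sim u u" by (simp add: sim_def)
lemma sim_sym: "sim u v \<Longrightarrow> sim v u" by (simp add: sim_def)
lemma sim_trans: "sim u v \<Longrightarrow> sim v w \<Longrightarrow> sim u w" by (simp add: sim_def)

definition step0 :: "nat list \<Rightarrow> nat list \<Rightarrow> bool" where
  "step0 u v \<longleftrightarrow> (\<exists>p q l r. u = p @ l @ q \<and> v = p @ r @ q \<and> (hypo_rule l r \<or> hypo_rule r l))"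

abbreviation hc where "hc \<equiv> step0\<^sup>*\<^sup>*"

lemma rule_mset: "hypo_rule l r \<Longrightarrow> mset l = mset r"
  by (induction rule: hypo_rule.induct) (auto simp: add_mset_commute)

lemma rule_bef:
  assumes "hypo_rule l r" "set l \<subseteq> S" "consec S a b"
  shows "bef l b a = bef r b a"
  using assms
  by (induction rule: hypo_rule.induct) (auto simp: consec_def)

lemma step0_sim: "step0 u v \<Longrightarrow> sim u v"
proof -
  assume "step0 u v"
  then obtain p q l r where u: "u = p @ l @ q" and v: "v = p @ r @ q" and h: "hypo_rule l r \<or> hypo_rule r l"
    unfolding step0_def by blast
  have m: "mset l = mset r" using h rule_mset by metis
  hence sl: "set l = set r" by (metis set_mset_mset)
  show ?thesis
  proof (rule simI)
    show "mset u = mset v" using u v m by simp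
  next
    fix a b assume a: "a \<in> set u" "b \<in> set u" "a < b" "\<forall>z\<in>set u. \<not> (a < z \<and> z < b)"
    hence c: "consec (set u) a b" by (simp add: consec_def)
    have "set l \<subseteq> set u" using u by auto
    hence "bef l b a = bef r b a" using h rule_bef[OF _ _ c] sl by metis
    thus "bef u b a = bef v b a" using u v sl by auto
  qed
qed

lemma hc_sim: "hc u v \<Longrightarrow> sim u v"
  by (induction rule: rtranclp_induct) (auto intro: sim_trans step0_sim)

lemma hc_ctx: "hc u v \<Longrightarrow> hc (p @ u @ q) (p @ v @ q)"
proof (induction rule: rtranclp_induct)
  case base then show ?case by simp
next
  case (step y z)
  then obtain p' q' l r where "y = p' @ l @ q'" "z = p' @ r @ q'" "hypo_rule l r \<or> hypo_rule r l"
    unfolding step0_def by blast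
  hence "step0 (p @ y @ q) (p @ z @ q)" unfolding step0_def
    by (rule_tac x="p @ p'" in exI, rule_tac x="q' @ q" in exI) auto
  thus ?case using step.IH by (meson rtranclp.rtrancl_into_rtrancl)
qed

lemma hc_sym: "hc u v \<Longrightarrow> hc v u"
proof (induction rule: rtranclp_induct)
  case base then show ?case by simp
next
  case (step y z)
  have "step0 z y" using step(2) unfolding step0_def by blast
  thus ?case using step.IH by (meson converse_rtranclp_into_rtranclp)
qed

lemma hc_rule: "hypo_rule l r \<Longrightarrow> hc (p @ l @ q) (p @ r @ q)"
  unfolding step0_def by (rule r_into_rtranclp) blast
lemma hc_rule': "hypo_rule r l \<Longrightarrow> hc (p @ l @ q) (p @ r @ q)"
  unfolding step0_def by (rule r_into_rtranclp) blast

lemma hc_trans: "hc u v \<Longrightarrow> hc v w \<Longrightarrow> hc u w" by (rule rtranclp_trans)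



definition IHm :: "nat \<Rightarrow> bool" where
  "IHm m \<longleftrightarrow> (\<forall>u v. length u < m \<longrightarrow> sim u v \<longrightarrow> hc u v)"

lemma IHm_mono: "IHm m \<Longrightarrow> k \<le> m \<Longrightarrow> IHm k"
  unfolding IHm_def by auto

lemma fac: "IHm m \<Longrightarrow> length F < m \<Longrightarrow> sim F F' \<Longrightarrow> hc (p @ F @ q) (p @ F' @ q)"
  unfolding IHm_def by (auto intro: hc_ctx)

lemma facL: "IHm m \<Longrightarrow> length F < m \<Longrightarrow> sim F F' \<Longrightarrow> hc (F @ q) (F' @ q)"
  using fac[of m F F' "[]" q] by simp
lemma facR: "IHm m \<Longrightarrow> length F < m \<Longrightarrow> sim F F' \<Longrightarrow> hc (p @ F) (p @ F')"
  using fac[of m F F' p "[]"] by simp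

lemma R1:
  assumes IH: "IHm (length w' + 3)" and yv: "y < v" and vM: "v \<le> M" and wy: "\<forall>z\<in>set w'. z \<le> y" and yM: "y < M"
  shows "hc (v # w' @ [M, y]) (v # w' @ [y, M])"
proof (cases "w' = []")
  case True
  have "hypo_rule [v, y, M] [v, M, y]" using yv vM by (rule hypo_rule.r2)
  then show ?thesis using True hc_rule'[of "[v, y, M]" "[v, M, y]" "[]" "[]"] by simp
next
  case False
  define am where "am = Max (set w')"
  have amin: "am \<in> set w'" using False am_def by simp
  have amax: "\<forall>z\<in>set w'. z \<le> am" using am_def by simp
  have amy: "am \<le> y" using amin wy by blast
  show ?thesis
  proof (cases "last w' = am")
    case True
    obtain w0 where w0: "w' = w0 @ [am]" using False True by (metis append_butlast_last_id)
    have s1: "hc ((v # w0 @ [am, M]) @ [y]) ((w0 @ [v, am, M]) @ [y])"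
    proof (rule facL[OF IH])
      show "length (v # w0 @ [am, M]) < length w' + 3" using w0 by simp
      show "sim (v # w0 @ [am, M]) (w0 @ [v, am, M])"
      proof (rule simI)
        show "mset (v # w0 @ [am, M]) = mset (w0 @ [v, am, M])" by simp
      next
        fix a b assume "a \<in> set (v # w0 @ [am, M])" "b \<in> set (v # w0 @ [am, M])" "a < b"
          "\<forall>z\<in>set (v # w0 @ [am, M]). \<not> (a < z \<and> z < b)"
        then show "bef (v # w0 @ [am, M]) b a = bef (w0 @ [v, am, M]) b a"
          using amax wy yv vM yM w0 by auto
      qed
    qed
    have s2: "hc (w0 @ [v, am, M, y] @ []) (w0 @ [am, v, y, M] @ [])"
      by (rule hc_rule, rule hypo_rule.r3) (use amy yv vM in auto)
    have s3: "hc ((w0 @ [am, v, y]) @ [M]) ((v # w0 @ [am, y]) @ [M])"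
    proof (rule facL[OF IH])
      show "length (w0 @ [am, v, y]) < length w' + 3" using w0 by simp
      show "sim (w0 @ [am, v, y]) (v # w0 @ [am, y])"
      proof (rule simI)
        show "mset (w0 @ [am, v, y]) = mset (v # w0 @ [am, y])" by simp
      next
        fix a b assume "a \<in> set (w0 @ [am, v, y])" "b \<in> set (w0 @ [am, v, y])" "a < b"
          "\<forall>z\<in>set (w0 @ [am, v, y]). \<not> (a < z \<and> z < b)"
        then show "bef (w0 @ [am, v, y]) b a = bef (v # w0 @ [am, y]) b a"
          using amax wy yv vM yM w0 by auto
      qed
    qed
    show ?thesis using s1 s2 s3 w0 by (auto intro: hc_trans)
  next
    case False
    obtain wa wb where wab: "w' = wa @ am # wb" and nb: "am \<notin> set wb"
      using amin by (metis split_list_last)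
    have wbne: "wb \<noteq> []" using False wab by auto
    have wbl: "\<forall>z\<in>set wb. z < am"
    proof
      fix z assume z: "z \<in> set wb"
      hence "z \<le> am" using amax wab by auto
      moreover have "z \<noteq> am" using z nb by auto
      ultimately show "z < am" by simp
    qed
    have s1: "hc ([v] @ (w' @ [M, y]) @ []) ([v] @ (wa @ am # M # y # wb) @ [])"
    proof (rule fac[OF IH])
      show "length (w' @ [M, y]) < length w' + 3" by simp
      show "sim (w' @ [M, y]) (wa @ am # M # y # wb)"
      proof (rule simI)
        show "mset (w' @ [M, y]) = mset (wa @ am # M # y # wb)" using wab by simp
      next
        fix a b assume "a \<in> set (w' @ [M, y])" "b \<in> set (w' @ [M, y])" "a < b"
          "\<forall>z\<in>set (w' @ [M, y]). \<not> (a < z \<and> z < b)"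
        then show "bef (w' @ [M, y]) b a = bef (wa @ am # M # y # wb) b a"
          using amax wy yv vM yM wab wbl amin by auto
      qed
    qed
    have s2: "hc ((v # wa @ [am, M, y]) @ wb) ((v # wa @ [am, y, M]) @ wb)"
    proof (rule facL[OF IH])
      show "length (v # wa @ [am, M, y]) < length w' + 3" using wab wbne by simp
      show "sim (v # wa @ [am, M, y]) (v # wa @ [am, y, M])"
      proof (rule simI)
        show "mset (v # wa @ [am, M, y]) = mset (v # wa @ [am, y, M])" by simp
      next
        fix a b assume "a \<in> set (v # wa @ [am, M, y])" "b \<in> set (v # wa @ [am, M, y])" "a < b"
          "\<forall>z\<in>set (v # wa @ [am, M, y]). \<not> (a < z \<and> z < b)"
        then show "bef (v # wa @ [am, M, y]) b a = bef (v # wa @ [am, y, M]) b a"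
          using amax wy yv vM yM wab by auto
      qed
    qed
    have s3: "hc ([v] @ (wa @ am # y # M # wb) @ []) ([v] @ (wa @ am # wb @ [y, M]) @ [])"
    proof (rule fac[OF IH])
      show "length (wa @ am # y # M # wb) < length w' + 3" using wab by simp
      show "sim (wa @ am # y # M # wb) (wa @ am # wb @ [y, M])"
      proof (rule simI)
        show "mset (wa @ am # y # M # wb) = mset (wa @ am # wb @ [y, M])" by simp
      next
        fix a b assume "a \<in> set (wa @ am # y # M # wb)" "b \<in> set (wa @ am # y # M # wb)" "a < b"
          "\<forall>z\<in>set (wa @ am # y # M # wb). \<not> (a < z \<and> z < b)"
        then show "bef (wa @ am # y # M # wb) b a = bef (wa @ am # wb @ [y, M]) b a"
          using amax wy yv vM yM wab wbl amin by auto
      qed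
    qed
    show ?thesis using s1 s2 s3 wab by (auto intro: hc_trans)
  qed
qed



lemma simI2:
  assumes "mset u = mset v"
    and "\<And>a b. a \<in> set u \<Longrightarrow> b \<in> set u \<Longrightarrow> a < b \<Longrightarrow> \<forall>z\<in>set u. \<not> (a < z \<and> z < b) \<Longrightarrow> bef u b a = bef v b a"
  shows "sim u v"
  using assms by (rule simI)

lemma L1:
  assumes IH: "IHm (length w0 + 3)" and xM: "x < M" and wx: "\<forall>z\<in>set w0. z < x" and xy: "x \<le> y" and yM: "y < M"
  shows "hc (x # M # w0 @ [y]) (M # x # w0 @ [y])"
proof (cases "w0 = []")
  case True
  have "hypo_rule [x, M, y] [M, x, y]" using xy yM by (rule hypo_rule.r1)
  then show ?thesis using True hc_rule[of "[x, M, y]" "[M, x, y]" "[]" "[]"] by simp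
next
  case False
  define c where "c = Max (set w0)"
  have cin: "c \<in> set w0" using False c_def by simp
  have cmax: "\<forall>z\<in>set w0. z \<le> c" using c_def by simp
  have cx: "c < x" using cin wx by blast
  obtain wa wb where wab: "w0 = wa @ c # wb" and nb: "c \<notin> set wb"
    using cin by (metis split_list_last)
  have wbl: "\<forall>z\<in>set wb. z < c"
  proof
    fix z assume z: "z \<in> set wb"
    hence "z \<le> c" using cmax wab by auto
    moreover have "z \<noteq> c" using z nb by auto
    ultimately show "z < c" by simp
  qed
  have wal: "\<forall>z\<in>set wa. z \<le> c" using cmax wab by auto
  show ?thesis
  proof (cases "wa = []")
    case False
    have s1: "hc ((x # M # wa @ c # wb) @ [y]) ((wa @ x # M # c # wb) @ [y])"
    proof (rule facL[OF IH])
      show "length (x # M # wa @ c # wb) < length w0 + 3" using wab by simp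
      show "sim (x # M # wa @ c # wb) (wa @ x # M # c # wb)"
      proof (rule simI2)
        show "mset (x # M # wa @ c # wb) = mset (wa @ x # M # c # wb)" by simp
      next
        fix a b assume "a \<in> set (x # M # wa @ c # wb)" "b \<in> set (x # M # wa @ c # wb)" "a < b"
          "\<forall>z\<in>set (x # M # wa @ c # wb). \<not> (a < z \<and> z < b)"
        then show "bef (x # M # wa @ c # wb) b a = bef (wa @ x # M # c # wb) b a"
          using wal wbl cx xM by auto
      qed
    qed
    have s2: "hc (wa @ (x # M # c # wb @ [y])) (wa @ (M # x # c # wb @ [y]))"
    proof (rule facR[OF IH])
      show "length (x # M # c # wb @ [y]) < length w0 + 3" using wab False by simp
      show "sim (x # M # c # wb @ [y]) (M # x # c # wb @ [y])"
      proof (rule simI2)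
        show "mset (x # M # c # wb @ [y]) = mset (M # x # c # wb @ [y])" by simp
      next
        fix a b assume "a \<in> set (x # M # c # wb @ [y])" "b \<in> set (x # M # c # wb @ [y])" "a < b"
          "\<forall>z\<in>set (x # M # c # wb @ [y]). \<not> (a < z \<and> z < b)"
        then show "bef (x # M # c # wb @ [y]) b a = bef (M # x # c # wb @ [y]) b a"
          using wbl cx xM xy yM by auto
      qed
    qed
    have s3: "hc ((wa @ M # x # c # wb) @ [y]) ((M # x # wa @ c # wb) @ [y])"
    proof (rule facL[OF IH])
      show "length (wa @ M # x # c # wb) < length w0 + 3" using wab by simp
      show "sim (wa @ M # x # c # wb) (M # x # wa @ c # wb)"
      proof (rule simI2)
        show "mset (wa @ M # x # c # wb) = mset (M # x # wa @ c # wb)" by simp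
      next
        fix a b assume "a \<in> set (wa @ M # x # c # wb)" "b \<in> set (wa @ M # x # c # wb)" "a < b"
          "\<forall>z\<in>set (wa @ M # x # c # wb). \<not> (a < z \<and> z < b)"
        then show "bef (wa @ M # x # c # wb) b a = bef (M # x # wa @ c # wb) b a"
          using wal wbl cx xM by auto
      qed
    qed
    show ?thesis using s1 s2 s3 wab by (auto intro: hc_trans)
  next
    case True
    have s1: "hc ([x, M] @ (c # wb @ [y]) @ []) ([x, M] @ (c # y # wb) @ [])"
    proof (rule fac[OF IH])
      show "length (c # wb @ [y]) < length w0 + 3" using wab by simp
      show "sim (c # wb @ [y]) (c # y # wb)"
      proof (rule simI2)
        show "mset (c # wb @ [y]) = mset (c # y # wb)" by simp
      next
        fix a b assume "a \<in> set (c # wb @ [y])" "b \<in> set (c # wb @ [y])" "a < b"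
          "\<forall>z\<in>set (c # wb @ [y]). \<not> (a < z \<and> z < b)"
        then show "bef (c # wb @ [y]) b a = bef (c # y # wb) b a"
          using wbl cx xy by auto
      qed
    qed
    have s2: "hc ([] @ [x, M, c, y] @ wb) ([] @ [M, x, y, c] @ wb)"
      by (rule hc_rule, rule hypo_rule.r4) (use cx xy yM in auto)
    have s3: "hc ([M] @ (x # y # c # wb) @ []) ([M] @ (x # c # wb @ [y]) @ [])"
    proof (rule fac[OF IH])
      show "length (x # y # c # wb) < length w0 + 3" using wab by simp
      show "sim (x # y # c # wb) (x # c # wb @ [y])"
      proof (rule simI2)
        show "mset (x # y # c # wb) = mset (x # c # wb @ [y])" by simp
      next
        fix a b assume "a \<in> set (x # y # c # wb)" "b \<in> set (x # y # c # wb)" "a < b"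
          "\<forall>z\<in>set (x # y # c # wb). \<not> (a < z \<and> z < b)"
        then show "bef (x # y # c # wb) b a = bef (x # c # wb @ [y]) b a"
          using wbl cx xy by auto
      qed
    qed
    show ?thesis using s1 s2 s3 wab True by (auto intro: hc_trans)
  qed
qed



lemma movemax:
  assumes le: "\<forall>z\<in>set u. z \<le> M" and f: "filter (\<lambda>z. z \<noteq> M) u = filter (\<lambda>z. z \<noteq> M) v"
    and cnt: "count (mset u) M = count (mset v) M"
    and st: "\<And>a. a \<in> set u \<Longrightarrow> a < M \<Longrightarrow> \<forall>z\<in>set u. z < M \<longrightarrow> z \<le> a \<Longrightarrow> bef u M a = bef v M a"
  shows "sim u v"
proof (rule simI)
  show m: "mset u = mset v"
  proof (rule multiset_eqI)
    fix x show "count (mset u) x = count (mset v) x"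
    proof (cases "x = M")
      case True then show ?thesis using cnt by simp
    next
      case False
      have "count (mset (filter (\<lambda>z. z \<noteq> M) u)) x = count (mset (filter (\<lambda>z. z \<noteq> M) v)) x"
        using f by simp
      thus ?thesis using False by (simp add: mset_filter)
    qed
  qed
  fix a b assume a: "a \<in> set u" "b \<in> set u" "a < b" "\<forall>z\<in>set u. \<not> (a < z \<and> z < b)"
  show "bef u b a = bef v b a"
  proof (cases "b = M")
    case True
    have "\<forall>z\<in>set u. z < M \<longrightarrow> z \<le> a" using a True by (meson not_le)
    then show ?thesis using st a True le by auto
  next
    case False
    hence bM: "b \<noteq> M" "a \<noteq> M" using a le by auto
    have "bef u b a = bef (filter (\<lambda>z. z \<noteq> M) u) b a" using bM by (simp add: bef_filter)
    also have "\<dots> = bef (filter (\<lambda>z. z \<noteq> M) v) b a" using f by simp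
    also have "\<dots> = bef v b a" using bM by (simp add: bef_filter)
    finally show ?thesis .
  qed
qed

lemma Rg:
  assumes IH: "IHm (length w + 2)" and le: "\<forall>z\<in>set w. z \<le> M" and yM: "y < M" and ex: "\<exists>z\<in>set w. y < z"
  shows "hc (w @ [M, y]) (w @ [y, M])"
proof -
  obtain w1 v w' where w: "w = w1 @ v # w'" and yv: "y < v" and nw: "\<forall>z\<in>set w'. \<not> y < z"
    using ex split_list_last_prop[of w "\<lambda>z. y < z"] by blast
  have "hc (w1 @ (v # w' @ [M, y]) @ []) (w1 @ (v # w' @ [y, M]) @ [])"
  proof (rule hc_ctx, rule R1)
    show "IHm (length w' + 3)" using IH w by (auto intro: IHm_mono)
    show "v \<le> M" using le w by auto
  qed (use yv nw yM in auto)
  thus ?thesis using w by simp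
qed

lemma MgM1:
  assumes "IHm (length g + 2)" "\<forall>z\<in>set g. z < M"
  shows "hc (M # g @ [M]) (M # M # g)"
  using assms
proof (induction g rule: rev_induct)
  case Nil then show ?case by simp
next
  case (snoc y g0)
  have a: "hc ((M # g0) @ [M, y]) ((M # g0) @ [y, M])"
    by (rule Rg) (use snoc.prems in \<open>auto intro: IHm_mono\<close>)
  have i: "IHm (length g0 + 2)" using snoc.prems(1) by (rule IHm_mono) simp
  have b: "hc ((M # g0 @ [M]) @ [y]) ((M # M # g0) @ [y])"
    using hc_ctx[OF snoc.IH[OF i], of "[]" "[y]"] snoc.prems by simp
  show ?case using a b by (auto intro: hc_trans hc_sym)
qed

lemma MgM:
  assumes IH: "IHm (Suc (length g + j))" and g: "\<forall>z\<in>set g. z < M"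
  shows "hc (M # g @ replicate j M) (replicate (Suc j) M @ g)"
  using IH
proof (induction j)
  case 0 then show ?case by simp
next
  case (Suc j)
  have i: "IHm (Suc (length g + j))" using Suc.prems(1) by (rule IHm_mono) simp
  have a: "hc ((M # g @ replicate j M) @ [M]) ((replicate (Suc j) M @ g) @ [M])"
    using hc_ctx[OF Suc.IH[OF i], of "[]" "[M]"] by simp
  have b: "hc (replicate j M @ (M # g @ [M]) @ []) (replicate j M @ (M # M # g) @ [])"
    by (rule hc_ctx, rule MgM1) (use Suc.prems g in \<open>auto intro: IHm_mono\<close>)
  have e1: "M # g @ replicate (Suc j) M = (M # g @ replicate j M) @ [M]"
    by (simp add: replicate_append_same)
  have e2: "(replicate (Suc j) M @ g) @ [M] = replicate j M @ (M # g @ [M]) @ []"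
    by (simp add: replicate_app_Cons_same)
  have e3: "replicate j M @ (M # M # g) @ [] = replicate (Suc (Suc j)) M @ g"
    by (simp add: replicate_app_Cons_same)
  show ?case using a b e1 e2 e3 by (metis hc_trans)
qed



lemma bef_rep_M[simp]: "bef (replicate k M) x y = (x = M \<and> y = M \<and> k \<ge> 2)"
  by (induction k) auto

lemma count_pos_in: "M \<in> set u \<Longrightarrow> count (mset u) M \<ge> 1"
  by (simp add: Suc_le_eq)

lemma filter_cons_M: "filter (\<lambda>z. z \<noteq> M) (M # u) = filter (\<lambda>z. z \<noteq> M) u" by simp

lemma len_split: "length u = length (filter (\<lambda>z. z \<noteq> M) u) + count (mset u) M"
  by (induction u) auto

lemma SLt:
  assumes IH: "IHm (length u)" and le: "\<forall>z\<in>set u. z \<le> M"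
    and hne: "filter (\<lambda>z. z \<noteq> M) u \<noteq> []"
    and st: "bef u M (Max (set (filter (\<lambda>z. z \<noteq> M) u)))"
  shows "hc u (replicate (count (mset u) M) M @ filter (\<lambda>z. z \<noteq> M) u)"
proof -
  define h where "h = filter (\<lambda>z. z \<noteq> M) u"
  define a where "a = Max (set h)"
  define k where "k = count (mset u) M"
  have ain: "a \<in> set h" unfolding a_def by (rule Max_in) (use hne h_def in \<open>auto simp: filter_empty_conv\<close>)
  have amax: "\<forall>z\<in>set h. z \<le> a" unfolding a_def by simp
  have hM: "\<forall>z\<in>set h. z < M" using le unfolding h_def by fastforce
  have aM: "a < M" using ain hM by blast
  have stu: "bef u M a" using st unfolding a_def h_def .
  have Min: "M \<in> set u" using bef_in[OF stu] by simp
  obtain x u' where u: "u = x # u'" using hne by (cases u) auto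
  have xMeq: "x = M \<Longrightarrow> u = M # u'" using u by simp
  have main: "hc u (replicate k M @ h)"
  proof (cases "x = M")
    case True
    have hu': "h = filter (\<lambda>z. z \<noteq> M) u'" unfolding h_def u using True by simp
    show ?thesis
    proof (cases "M \<in> set u'")
      case False
      have "filter (\<lambda>z. z \<noteq> M) u' = u'" using False by (induction u') auto
      moreover have c0: "count (mset u') M = 0" using False by (simp add: count_mset_0_iff)
      moreover have "k = 1" unfolding k_def using u True c0 by (simp del: count_mset_0_iff)
      ultimately show ?thesis using u True hu' by (simp del: count_mset_0_iff)
    next
      assume Mu': "M \<in> set u'"
      have k': "count (mset u') M = k - 1" unfolding k_def u using True by simp
      have k1: "k \<ge> 2" unfolding k_def u using True Mu' by (simp add: Suc_le_eq)
      have leu': "\<forall>z\<in>set u'. z \<le> M" using le u by auto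
      have amax': "\<And>b. b \<in> set u' \<Longrightarrow> b < M \<Longrightarrow> \<forall>z\<in>set u'. z < M \<longrightarrow> z \<le> b \<Longrightarrow> b = a"
      proof -
        fix b assume b: "b \<in> set u'" "b < M" "\<forall>z\<in>set u'. z < M \<longrightarrow> z \<le> b"
        have "b \<in> set h" using b hu' by auto
        hence "b \<le> a" using amax by blast
        moreover have "a \<in> set u'" using ain hu' by auto
        hence "a \<le> b" using b aM by blast
        ultimately show "b = a" by simp
      qed
      show ?thesis
      proof (cases "bef u' M a")
        case True
        have sm: "sim u' (replicate (k - 1) M @ h)"
        proof (rule movemax[OF leu'])
          show "filter (\<lambda>z. z \<noteq> M) u' = filter (\<lambda>z. z \<noteq> M) (replicate (k - 1) M @ h)"
            using hu' unfolding h_def by (simp add: filter_replicate)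
          show "count (mset u') M = count (mset (replicate (k - 1) M @ h)) M"
            using k' hM by (auto simp: count_mset_0_iff)
          fix b assume "b \<in> set u'" "b < M" "\<forall>z\<in>set u'. z < M \<longrightarrow> z \<le> b"
          hence "b = a" using amax' by blast
          then show "bef u' M b = bef (replicate (k - 1) M @ h) M b"
            using True ain k1 by simp
        qed
        have hc1: "hc ([M] @ u') ([M] @ (replicate (k - 1) M @ h))"
          by (rule facR[OF IH]) (use u sm in auto)
        have eu: "u = [M] @ u'" using xMeq \<open>x = M\<close> by simp
        have e: "replicate k M @ h = [M] @ (replicate (k - 1) M @ h)"
          using k1 by (cases k) auto
        show ?thesis unfolding eu e by (rule hc1)
      next
        case False
        have sm: "sim u' (h @ replicate (k - 1) M)"
        proof (rule movemax[OF leu'])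
          show "filter (\<lambda>z. z \<noteq> M) u' = filter (\<lambda>z. z \<noteq> M) (h @ replicate (k - 1) M)"
            using hu' unfolding h_def by (simp add: filter_replicate)
          show "count (mset u') M = count (mset (h @ replicate (k - 1) M)) M"
            using k' hM by (auto simp: count_mset_0_iff)
          fix b assume "b \<in> set u'" "b < M" "\<forall>z\<in>set u'. z < M \<longrightarrow> z \<le> b"
          hence "b = a" using amax' by blast
          then show "bef u' M b = bef (h @ replicate (k - 1) M) M b"
            using False hM aM by (auto dest: bef_in)
        qed
        have hc1: "hc ([M] @ u') ([M] @ (h @ replicate (k - 1) M))"
          by (rule facR[OF IH]) (use u sm in auto)
        have hc2: "hc (M # h @ replicate (k - 1) M) (replicate (Suc (k - 1)) M @ h)"
        proof (rule MgM[OF _ hM])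
          have "length u = length h + k" unfolding h_def k_def by (rule len_split)
          thus "IHm (Suc (length h + (k - 1)))" using IH k1 by simp
        qed
        have eu: "u = [M] @ u'" using xMeq \<open>x = M\<close> by simp
        have e: "Suc (k - 1) = k" using k1 by simp
        have hc2': "hc ([M] @ (h @ replicate (k - 1) M)) (replicate k M @ h)"
          using hc2 unfolding e by simp
        show ?thesis unfolding eu by (rule hc_trans[OF hc1 hc2'])
      qed
    qed
  next
    case False
    have xM: "x < M" using le u False by auto
    define h' where "h' = filter (\<lambda>z. z \<noteq> M) u'"
    have hx: "h = x # h'" unfolding h_def h'_def u using False by simp
    have k': "count (mset u') M = k" unfolding k_def u using False by simp
    have st': "bef u' M a" using stu u False by simp
    have ain': "a \<in> set h'" using bef_in[OF st'] aM unfolding h'_def by auto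
    have xa: "x \<le> a" using amax hx by simp
    have Mu': "M \<in> set u'" using bef_in[OF st'] by simp
    have k1: "k \<ge> 1" using k' Mu' by (metis count_mset_0_iff less_one not_le)
    have leu': "\<forall>z\<in>set u'. z \<le> M" using le u by auto
    have h'M: "\<forall>z\<in>set h'. z < M" using hM hx by simp
    have lenu: "length u = length h + k" unfolding h_def k_def by (rule len_split)
    have sm: "sim u' (M # h' @ replicate (k - 1) M)"
    proof (rule movemax[OF leu'])
      have "filter (\<lambda>z. z \<noteq> M) h' = h'" unfolding h'_def by simp
      then show "filter (\<lambda>z. z \<noteq> M) u' = filter (\<lambda>z. z \<noteq> M) (M # h' @ replicate (k - 1) M)"
        unfolding h'_def by (simp add: filter_replicate)
      show "count (mset u') M = count (mset (M # h' @ replicate (k - 1) M)) M"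
        using k' h'M k1 by (auto simp: count_mset_0_iff)
      fix b assume b: "b \<in> set u'" "b < M" "\<forall>z\<in>set u'. z < M \<longrightarrow> z \<le> b"
      have "b \<in> set h" using b hx unfolding h'_def by auto
      hence "b \<le> a" using amax by blast
      moreover have "a \<le> b" using b ain' aM unfolding h'_def by auto
      ultimately have "b = a" by simp
      then show "bef u' M b = bef (M # h' @ replicate (k - 1) M) M b"
        using st' ain' by simp
    qed
    have hc1: "hc ([x] @ u') ([x] @ (M # h' @ replicate (k - 1) M))"
      by (rule facR[OF IH]) (use u sm in auto)
    obtain w0 y w2 where h'w: "h' = w0 @ y # w2" and xy: "x \<le> y" and w0x: "\<forall>z\<in>set w0. \<not> x \<le> z"
      using split_list_first_prop[of h' "\<lambda>z. x \<le> z"] ain' xa by blast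
    have yM: "y < M" using h'M h'w by simp
    have hc2: "hc ([] @ (x # M # w0 @ [y]) @ (w2 @ replicate (k - 1) M)) ([] @ (M # x # w0 @ [y]) @ (w2 @ replicate (k - 1) M))"
    proof (rule hc_ctx, rule L1)
      show "IHm (length w0 + 3)" using IH lenu hx h'w k1 by (auto intro: IHm_mono)
    qed (use xM w0x xy yM in auto)
    have hc3: "hc (M # (x # h') @ replicate (k - 1) M) (replicate (Suc (k - 1)) M @ (x # h'))"
    proof (rule MgM)
      show "IHm (Suc (length (x # h') + (k - 1)))" using IH lenu hx k1 by simp
      show "\<forall>z\<in>set (x # h'). z < M" using h'M xM by simp
    qed
    have e1: "[x] @ (M # h' @ replicate (k - 1) M) = [] @ (x # M # w0 @ [y]) @ (w2 @ replicate (k - 1) M)"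
      using h'w by simp
    have e2: "[] @ (M # x # w0 @ [y]) @ (w2 @ replicate (k - 1) M) = M # (x # h') @ replicate (k - 1) M"
      using h'w by simp
    have e3: "replicate (Suc (k - 1)) M @ (x # h') = replicate k M @ h" using k1 hx by simp
    have eu: "u = [x] @ u'" using u by simp
    show ?thesis unfolding eu using hc1 hc2 hc3 e1 e2 e3 by (metis hc_trans)
  qed
  thus ?thesis unfolding h_def k_def .
qed

lemma SLf:
  assumes IH: "IHm (length u)" and le: "\<forall>z\<in>set u. z \<le> M" and Min: "M \<in> set u"
    and hne: "filter (\<lambda>z. z \<noteq> M) u \<noteq> []"
    and st: "\<not> bef u M (Max (set (filter (\<lambda>z. z \<noteq> M) u)))"
  shows "hc u (filter (\<lambda>z. z \<noteq> M) u @ replicate (count (mset u) M) M)"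
proof -
  define h where "h = filter (\<lambda>z. z \<noteq> M) u"
  define a where "a = Max (set h)"
  define k where "k = count (mset u) M"
  have ain: "a \<in> set h" unfolding a_def by (rule Max_in) (use hne h_def in \<open>auto simp: filter_empty_conv\<close>)
  have amax: "\<forall>z\<in>set h. z \<le> a" unfolding a_def by simp
  have hM: "\<forall>z\<in>set h. z < M" using le unfolding h_def by fastforce
  have aM: "a < M" using ain hM by blast
  have stu: "\<not> bef u M a" using st unfolding a_def h_def .
  have lenu: "length u = length h + k" unfolding h_def k_def by (rule len_split)
  obtain u' y where u: "u = u' @ [y]" using hne by (cases u rule: rev_cases) auto
  have main: "hc u (h @ replicate k M)"
  proof (cases "y = M")
    case True
    have hu': "h = filter (\<lambda>z. z \<noteq> M) u'" unfolding h_def u using True by simp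
    show ?thesis
    proof (cases "M \<in> set u'")
      case False
      have "filter (\<lambda>z. z \<noteq> M) u' = u'" using False by (induction u') auto
      moreover have c0: "count (mset u') M = 0" using False by (simp add: count_mset_0_iff)
      moreover have "k = 1" unfolding k_def using u True c0 by (simp del: count_mset_0_iff)
      ultimately show ?thesis using u True hu' by (simp del: count_mset_0_iff)
    next
      assume Mu': "M \<in> set u'"
      have k': "count (mset u') M = k - 1" unfolding k_def u using True by simp
      have k1: "k \<ge> 2" unfolding k_def u using True Mu' by (simp add: Suc_le_eq)
      have leu': "\<forall>z\<in>set u'. z \<le> M" using le u by auto
      have st': "\<not> bef u' M a" using stu u by simp
      have sm: "sim u' (h @ replicate (k - 1) M)"
      proof (rule movemax[OF leu'])
        show "filter (\<lambda>z. z \<noteq> M) u' = filter (\<lambda>z. z \<noteq> M) (h @ replicate (k - 1) M)"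
          using hu' unfolding h_def by (simp add: filter_replicate)
        show "count (mset u') M = count (mset (h @ replicate (k - 1) M)) M"
          using k' hM by (auto simp: count_mset_0_iff)
        fix b assume b: "b \<in> set u'" "b < M" "\<forall>z\<in>set u'. z < M \<longrightarrow> z \<le> b"
        have "b \<in> set h" using b hu' by auto
        hence "b \<le> a" using amax by blast
        moreover have "a \<in> set u'" using ain hu' by auto
        hence "a \<le> b" using b aM by blast
        ultimately have "b = a" by simp
        then show "bef u' M b = bef (h @ replicate (k - 1) M) M b"
          using st' hM aM by (auto dest: bef_in)
      qed
      have hc1: "hc (u' @ [M]) ((h @ replicate (k - 1) M) @ [M])"
        by (rule facL[OF IH]) (use u sm in auto)
      have e: "(h @ replicate (k - 1) M) @ [M] = h @ replicate k M"
        using k1 by (cases k) (auto simp: replicate_append_same)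
      show ?thesis using hc1 e u True by simp
    qed
  next
    case False
    have yM: "y < M" using le u False by auto
    define h' where "h' = filter (\<lambda>z. z \<noteq> M) u'"
    have hy: "h = h' @ [y]" unfolding h_def h'_def u using False by simp
    have k': "count (mset u') M = k" unfolding k_def u using False by simp
    have Mu': "M \<in> set u'" using Min u False by auto
    have k1: "k \<ge> 1" using k' Mu' by (metis count_mset_0_iff less_one not_le)
    have ay: "y < a"
    proof -
      have "y \<le> a" using amax hy by simp
      moreover have "y \<noteq> a"
      proof
        assume "y = a"
        hence "bef u M a" using u Mu' by simp
        thus False using stu by simp
      qed
      ultimately show ?thesis by simp
    qed
    have ain': "a \<in> set h'" using ain hy ay by auto
    have st': "\<not> bef u' M a" using stu u by simp
    have leu': "\<forall>z\<in>set u'. z \<le> M" using le u by auto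
    have h'M: "\<forall>z\<in>set h'. z < M" using hM hy by simp
    have sm: "sim u' (h' @ replicate k M)"
    proof (rule movemax[OF leu'])
      have "filter (\<lambda>z. z \<noteq> M) h' = h'" unfolding h'_def by simp
      then show "filter (\<lambda>z. z \<noteq> M) u' = filter (\<lambda>z. z \<noteq> M) (h' @ replicate k M)"
        unfolding h'_def by (simp add: filter_replicate)
      show "count (mset u') M = count (mset (h' @ replicate k M)) M"
        using k' h'M by (auto simp: count_mset_0_iff)
      fix b assume b: "b \<in> set u'" "b < M" "\<forall>z\<in>set u'. z < M \<longrightarrow> z \<le> b"
      have "b \<in> set h" using b hy unfolding h'_def by auto
      hence "b \<le> a" using amax by blast
      moreover have "a \<le> b" using b ain' aM unfolding h'_def by auto
      ultimately have "b = a" by simp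
      then show "bef u' M b = bef (h' @ replicate k M) M b"
        using st' h'M aM by (auto dest: bef_in)
    qed
    have hc1: "hc (u' @ [y]) ((h' @ replicate k M) @ [y])"
      by (rule facL[OF IH]) (use u sm in auto)
    have hc2: "hc ((h' @ replicate (k - 1) M) @ [M, y]) ((h' @ replicate (k - 1) M) @ [y, M])"
    proof (rule Rg)
      show "IHm (length (h' @ replicate (k - 1) M) + 2)" using IH lenu hy k1 by (auto intro: IHm_mono)
      show "\<forall>z\<in>set (h' @ replicate (k - 1) M). z \<le> M" using h'M by auto
      show "\<exists>z\<in>set (h' @ replicate (k - 1) M). y < z" using ain' ay by auto
    qed (rule yM)
    have sm3: "sim (h' @ replicate (k - 1) M @ [y]) (h' @ [y] @ replicate (k - 1) M)"
    proof (rule movemax)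
      show "\<forall>z\<in>set (h' @ replicate (k - 1) M @ [y]). z \<le> M" using h'M yM by auto
      show "filter (\<lambda>z. z \<noteq> M) (h' @ replicate (k - 1) M @ [y]) = filter (\<lambda>z. z \<noteq> M) (h' @ [y] @ replicate (k - 1) M)"
        by (simp add: filter_replicate)
      show "count (mset (h' @ replicate (k - 1) M @ [y])) M = count (mset (h' @ [y] @ replicate (k - 1) M)) M"
        by simp
      fix b assume b: "b \<in> set (h' @ replicate (k - 1) M @ [y])" "b < M"
        "\<forall>z\<in>set (h' @ replicate (k - 1) M @ [y]). z < M \<longrightarrow> z \<le> b"
      have "a \<le> b" using b ain' aM by auto
      hence "b \<noteq> y" using ay by simp
      then show "bef (h' @ replicate (k - 1) M @ [y]) M b = bef (h' @ [y] @ replicate (k - 1) M) M b"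
        using h'M b(2) by (auto dest: bef_in)
    qed
    have hc3: "hc ((h' @ replicate (k - 1) M @ [y]) @ [M]) ((h' @ [y] @ replicate (k - 1) M) @ [M])"
    proof (rule facL[OF IH _ sm3])
      show "length (h' @ replicate (k - 1) M @ [y]) < length u" using lenu hy k1 by simp
    qed
    have e1: "(h' @ replicate k M) @ [y] = (h' @ replicate (k - 1) M) @ [M, y]"
      using k1 by (cases k) (auto simp: replicate_append_same)
    have e2: "(h' @ replicate (k - 1) M) @ [y, M] = (h' @ replicate (k - 1) M @ [y]) @ [M]" by simp
    have e3: "(h' @ [y] @ replicate (k - 1) M) @ [M] = h @ replicate k M"
      using k1 hy by (cases k) (auto simp: replicate_append_same)
    have "hc u ((h' @ replicate (k - 1) M) @ [M, y])" using hc1 e1 u by simp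
    moreover have "hc ((h' @ replicate (k - 1) M) @ [M, y]) ((h' @ replicate (k - 1) M @ [y]) @ [M])"
      using hc2 e2 by simp
    moreover have "hc ((h' @ replicate (k - 1) M @ [y]) @ [M]) (h @ replicate k M)"
      using hc3 e3 by simp
    ultimately show ?thesis by (meson hc_trans)
  qed
  thus ?thesis unfolding h_def k_def .
qed

lemma sim_filter_max:
  assumes s: "sim u v" and le: "\<forall>z\<in>set u. z \<le> M"
  shows "sim (filter (\<lambda>z. z \<noteq> M) u) (filter (\<lambda>z. z \<noteq> M) v)"
proof (rule simI)
  show "mset (filter (\<lambda>z. z \<noteq> M) u) = mset (filter (\<lambda>z. z \<noteq> M) v)"
    using s unfolding sim_def by (simp add: mset_filter)
  fix a b assume a: "a \<in> set (filter (\<lambda>z. z \<noteq> M) u)" "b \<in> set (filter (\<lambda>z. z \<noteq> M) u)" "a < b"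
    "\<forall>z\<in>set (filter (\<lambda>z. z \<noteq> M) u). \<not> (a < z \<and> z < b)"
  have bM: "b < M" using a le by auto
  have c: "consec (set u) a b" unfolding consec_def using a bM by auto
  have "bef u b a = bef v b a" using sim_bef[OF s c] .
  then show "bef (filter (\<lambda>z. z \<noteq> M) u) b a = bef (filter (\<lambda>z. z \<noteq> M) v) b a"
    using a by (simp add: bef_filter)
qed




theorem char2: "sim u v \<Longrightarrow> hc u v"
proof (induction "length u" arbitrary: u v rule: less_induct)
  case less
  have IH: "IHm (length u)" unfolding IHm_def using less.hyps by blast
  have mu: "mset u = mset v" using less.prems unfolding sim_def by simp
  have se: "set v = set u" using mu by (metis set_mset_mset)
  have lv: "length v = length u" using mu by (metis size_mset)
  show ?case
  proof (cases "u = []")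
    case True then show ?thesis using mu by simp
  next
    case False
    define M where "M = Max (set u)"
    have le: "\<forall>z\<in>set u. z \<le> M" unfolding M_def by simp
    have Min: "M \<in> set u" unfolding M_def using False by simp
    have lev: "\<forall>z\<in>set v. z \<le> M" using le se by simp
    have Minv: "M \<in> set v" using Min se by simp
    define hu where "hu = filter (\<lambda>z. z \<noteq> M) u"
    define hv where "hv = filter (\<lambda>z. z \<noteq> M) v"
    have mh: "mset hu = mset hv" unfolding hu_def hv_def using mu by (simp add: mset_filter)
    have sh: "set hu = set hv" using mh by (metis set_mset_mset)
    have cnt: "count (mset u) M = count (mset v) M" using mu by simp
    show ?thesis
    proof (cases "hu = []")
      case True
      have "hv = []" using True mh by simp
      have "\<forall>z\<in>set u. z = M" using True unfolding hu_def by (simp add: filter_empty_conv)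
      hence "u = replicate (length u) M" by (simp add: replicate_length_same)
      moreover have "\<forall>z\<in>set v. z = M" using \<open>hv = []\<close> unfolding hv_def by (simp add: filter_empty_conv)
      hence "v = replicate (length v) M" by (simp add: replicate_length_same)
      ultimately show ?thesis using lv by simp
    next
      case False
      have hvne: "hv \<noteq> []" using False mh by auto
      define a where "a = Max (set hu)"
      have ain: "a \<in> set hu" unfolding a_def using False by simp
      have aM: "a < M" using ain le unfolding hu_def by fastforce
      have amx: "\<forall>z\<in>set hu. z \<le> a" unfolding a_def by simp
      have c: "consec (set u) a M"
        unfolding consec_def
      proof (intro conjI ballI)
        show "a \<in> set u" using ain unfolding hu_def by simp
        show "M \<in> set u" by (rule Min)
        show "a < M" by (rule aM)
        fix z assume z: "z \<in> set u"
        show "\<not> (a < z \<and> z < M)"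
        proof
          assume "a < z \<and> z < M"
          hence "z \<in> set hu" using z unfolding hu_def by simp
          thus False using amx \<open>a < z \<and> z < M\<close> by fastforce
        qed
      qed
      have sts: "bef u M a = bef v M a" using sim_bef[OF less.prems c] .
      have av: "a = Max (set hv)" using sh a_def by simp
      have simh: "sim hu hv" unfolding hu_def hv_def using sim_filter_max[OF less.prems le] .
      have lh: "length hu < length u" unfolding hu_def using length_filter_less[of M u "\<lambda>z. z \<noteq> M"] Min by simp
      have hch: "hc hu hv" using less.hyps[OF lh simh] .
      have IHv: "IHm (length v)" using IH lv by simp
      show ?thesis
      proof (cases "bef u M a")
        case True
        have 1: "hc u (replicate (count (mset u) M) M @ hu)"
          unfolding hu_def by (rule SLt[OF IH le]) (use False True in \<open>simp_all add: hu_def a_def\<close>)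
        have 2: "hc v (replicate (count (mset v) M) M @ hv)"
          unfolding hv_def by (rule SLt[OF IHv lev]) (use hvne True sts av in \<open>simp_all add: hv_def\<close>)
        have 3: "hc (replicate (count (mset u) M) M @ hu) (replicate (count (mset v) M) M @ hv)"
          using hc_ctx[OF hch, of "replicate (count (mset u) M) M" "[]"] cnt by simp
        show ?thesis by (rule hc_trans[OF 1 hc_trans[OF 3 hc_sym[OF 2]]])
      next
        case False
        have 1: "hc u (hu @ replicate (count (mset u) M) M)"
          unfolding hu_def by (rule SLf[OF IH le Min]) (use \<open>hu \<noteq> []\<close> False in \<open>simp_all add: hu_def a_def\<close>)
        have 2: "hc v (hv @ replicate (count (mset v) M) M)"
          unfolding hv_def by (rule SLf[OF IHv lev Minv]) (use hvne False sts av in \<open>simp_all add: hv_def\<close>)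
        have 3: "hc (hu @ replicate (count (mset u) M) M) (hv @ replicate (count (mset v) M) M)"
          using hc_ctx[OF hch, of "[]" "replicate (count (mset u) M) M"] cnt by simp
        show ?thesis by (rule hc_trans[OF 1 hc_trans[OF 3 hc_sym[OF 2]]])
      qed
    qed
  qed
qed



lemma step0_mset: "step0 u v \<Longrightarrow> mset u = mset v"
  using step0_sim sim_def by blast

lemma hcong_hc: "hcong A u v \<Longrightarrow> hc u v"
proof -
  assume "hcong A u v"
  hence "(hstep A)\<^sup>*\<^sup>* u v" unfolding hcong_def by simp
  thus "hc u v"
  proof (induction rule: rtranclp_induct)
    case base then show ?case by simp
  next
    case (step y z)
    have "step0 y z" using step(2) unfolding hstep_def step0_def by blast
    thus ?case using step.IH by (meson rtranclp.rtrancl_into_rtrancl)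
  qed
qed

lemma hc_hcong: "hc u v \<Longrightarrow> set u \<subseteq> A \<Longrightarrow> hcong A u v"
proof -
  assume h: "hc u v" and A: "set u \<subseteq> A"
  have "(hstep A)\<^sup>*\<^sup>* u v \<and> set v = set u" using h
  proof (induction rule: rtranclp_induct)
    case base then show ?case by simp
  next
    case (step y z)
    have sz: "set z = set y" using step0_mset[OF step(2)] by (metis set_mset_mset)
    have hs: "hstep A y z" using step(2) step.IH sz A unfolding hstep_def step0_def by auto
    have "(hstep A)\<^sup>*\<^sup>* u z" using step.IH hs by (meson rtranclp.rtrancl_into_rtrancl)
    thus ?case using step.IH sz by simp
  qed
  thus ?thesis unfolding hcong_def using A by auto
qed

lemma hcong_iff: "set u \<subseteq> A \<Longrightarrow> hcong A u v \<longleftrightarrow> sim u v"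
  using hcong_hc hc_sim char2 hc_hcong by blast

lemma sim_set: "sim u v \<Longrightarrow> set u = set v"
  unfolding sim_def by (metis set_mset_mset)

lemma mem_cls: "w \<in> cls A u \<longleftrightarrow> set u \<subseteq> A \<and> sim u w"
proof
  assume "w \<in> cls A u"
  hence h: "hcong A u w" unfolding cls_def by simp
  hence "set u \<subseteq> A" unfolding hcong_def by simp
  thus "set u \<subseteq> A \<and> sim u w" using h hcong_iff by blast
next
  assume "set u \<subseteq> A \<and> sim u w"
  thus "w \<in> cls A u" unfolding cls_def using hcong_iff by blast
qed

lemma cls_eq: "set u \<subseteq> A \<Longrightarrow> sim u v \<Longrightarrow> cls A u = cls A v"
proof (rule set_eqI)
  fix w assume A: "set u \<subseteq> A" and s: "sim u v"
  have A': "set v \<subseteq> A" using A sim_set[OF s] by simp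
  have "sim u w \<longleftrightarrow> sim v w" using s sim_sym sim_trans by blast
  thus "w \<in> cls A u \<longleftrightarrow> w \<in> cls A v" unfolding mem_cls using A A' by simp
qed

lemma cls_eq_iff: "set u \<subseteq> A \<Longrightarrow> set v \<subseteq> A \<Longrightarrow> cls A u = cls A v \<longleftrightarrow> sim u v"
proof
  assume A: "set u \<subseteq> A" "set v \<subseteq> A" and e: "cls A u = cls A v"
  have "v \<in> cls A v" using A mem_cls by simp
  hence "v \<in> cls A u" using e by simp
  thus "sim u v" using mem_cls by blast
next
  assume A: "set u \<subseteq> A" "set v \<subseteq> A" and "sim u v"
  thus "cls A u = cls A v" using cls_eq by blast
qed

lemma sim_app: "sim x x' \<Longrightarrow> sim y y' \<Longrightarrow> sim (x @ y) (x' @ y')"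
proof -
  assume a: "sim x x'" "sim y y'"
  have "hc ([] @ x @ y) ([] @ x' @ y)" by (rule hc_ctx, rule char2[OF a(1)])
  moreover have "hc (x' @ y @ []) (x' @ y' @ [])" by (rule hc_ctx, rule char2[OF a(2)])
  ultimately have "hc (x @ y) (x' @ y')" by (simp add: hc_trans)
  thus ?thesis by (rule hc_sim)
qed

lemma mmult_cls: "set x \<subseteq> A \<Longrightarrow> set y \<subseteq> A \<Longrightarrow> mmult A (cls A x) (cls A y) = cls A (x @ y)"
proof -
  assume A: "set x \<subseteq> A" "set y \<subseteq> A"
  show ?thesis
  proof (rule set_eqI)
    fix w
    show "w \<in> mmult A (cls A x) (cls A y) \<longleftrightarrow> w \<in> cls A (x @ y)"
    proof
      assume "w \<in> mmult A (cls A x) (cls A y)"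
      then obtain x' y' where x': "x' \<in> cls A x" and y': "y' \<in> cls A y" and h: "hcong A (x' @ y') w"
        unfolding mmult_def by blast
      have sx: "sim x x'" "sim y y'" using x' y' mem_cls by auto
      have "sim (x' @ y') w" using h hcong_hc hc_sim by blast
      hence "sim (x @ y) w" using sim_app[OF sx] sim_trans by blast
      thus "w \<in> cls A (x @ y)" using A mem_cls by auto
    next
      assume "w \<in> cls A (x @ y)"
      hence "hcong A (x @ y) w" unfolding cls_def by simp
      moreover have "x \<in> cls A x" "y \<in> cls A y" using A mem_cls by auto
      ultimately show "w \<in> mmult A (cls A x) (cls A y)" unfolding mmult_def by blast
    qed
  qed
qed

lemma Mon_iff: "s \<in> Mon A \<longleftrightarrow> (\<exists>w. set w \<subseteq> A \<and> s = cls A w)"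
  unfolding Mon_def by auto

lemma cshift_I: "set x \<subseteq> A \<Longrightarrow> set y \<subseteq> A \<Longrightarrow> cshift A (cls A (x @ y)) (cls A (y @ x))"
proof -
  assume A: "set x \<subseteq> A" "set y \<subseteq> A"
  have m1: "cls A (x @ y) \<in> Mon A" unfolding Mon_iff using A by (intro exI[of _ "x @ y"]) auto
  have m2: "cls A (y @ x) \<in> Mon A" unfolding Mon_iff using A by (intro exI[of _ "y @ x"]) auto
  have m3: "cls A x \<in> Mon A" "cls A y \<in> Mon A" unfolding Mon_iff using A by auto
  show ?thesis unfolding cshift_def
    using m1 m2 m3 mmult_cls[OF A] mmult_cls[OF A(2) A(1)] by blast
qed

lemma cshift_D: "cshift A s t \<Longrightarrow> \<exists>x y. set x \<subseteq> A \<and> set y \<subseteq> A \<and> s = cls A (x @ y) \<and> t = cls A (y @ x)"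
proof -
  assume "cshift A s t"
  then obtain X Y where X: "X \<in> Mon A" and Y: "Y \<in> Mon A" and st: "s = mmult A X Y" "t = mmult A Y X"
    unfolding cshift_def by blast
  obtain x where x: "set x \<subseteq> A" "X = cls A x" using X Mon_iff by blast
  obtain y where y: "set y \<subseteq> A" "Y = cls A y" using Y Mon_iff by blast
  show ?thesis using x y st mmult_cls by metis
qed

lemma evalw_eq: "evalw u = evalw v \<longleftrightarrow> mset u = mset v"
  unfolding evalw_def by (simp add: fun_eq_iff multiset_eq_iff count_mset)

lemma ev_equiv_cls: "set u \<subseteq> A \<Longrightarrow> set v \<subseteq> A \<Longrightarrow> ev_equiv (cls A u) (cls A v) \<longleftrightarrow> mset u = mset v"
proof
  assume A: "set u \<subseteq> A" "set v \<subseteq> A" and "ev_equiv (cls A u) (cls A v)"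
  then obtain u' v' where a: "u' \<in> cls A u" "v' \<in> cls A v" "evalw u' = evalw v'" unfolding ev_equiv_def by blast
  have "mset u = mset u'" "mset v = mset v'" using a(1,2) mem_cls sim_def by blast+
  thus "mset u = mset v" using a(3) evalw_eq by simp
next
  assume A: "set u \<subseteq> A" "set v \<subseteq> A" and "mset u = mset v"
  moreover have "u \<in> cls A u" "v \<in> cls A v" using A mem_cls by auto
  ultimately show "ev_equiv (cls A u) (cls A v)" unfolding ev_equiv_def using evalw_eq by blast
qed



definition lo :: "nat \<Rightarrow> nat list \<Rightarrow> nat list" where "lo c w = filter (\<lambda>z. z \<le> c) w"
definition hi :: "nat \<Rightarrow> nat list \<Rightarrow> nat list" where "hi c w = filter (\<lambda>z. c < z) w"

lemma mset_lohi: "mset (lo c w @ hi c w) = mset w" "mset (hi c w @ lo c w) = mset w"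
  unfolding lo_def hi_def by (induction w) auto

lemma set_lo: "set (lo c w) = {z \<in> set w. z \<le> c}" unfolding lo_def by auto
lemma set_hi: "set (hi c w) = {z \<in> set w. c < z}" unfolding hi_def by auto

lemma bef_lo: "x < y \<Longrightarrow> bef (lo c w) y x = (y \<le> c \<and> bef w y x)"
proof (cases "y \<le> c")
  case True
  assume "x < y"
  then show ?thesis using True unfolding lo_def by (simp add: bef_filter)
next
  case False
  hence "y \<notin> set (lo c w)" unfolding set_lo by simp
  then show ?thesis using False by (auto dest: bef_in)
qed

lemma bef_hi: "x < y \<Longrightarrow> bef (hi c w) y x = (c < x \<and> bef w y x)"
proof (cases "c < x")
  case True
  assume "x < y"
  then show ?thesis using True unfolding hi_def by (simp add: bef_filter)
next
  case False
  hence "x \<notin> set (hi c w)" unfolding set_hi by simp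
  then show ?thesis using False by (auto dest: bef_in)
qed

lemma bef_lohi:
  assumes "x < y"
  shows "bef (lo c w @ hi c w) y x = (bef w y x \<and> \<not> (x \<le> c \<and> c < y))"
    and "bef (hi c w @ lo c w) y x = (bef w y x \<or> (x \<le> c \<and> c < y \<and> x \<in> set w \<and> y \<in> set w))"
  using assms bef_lo[OF assms, of c w] bef_hi[OF assms, of c w]
  by (auto simp: set_lo set_hi dest: bef_in)

lemma set_lohi: "set (lo c w @ hi c w) = set w" "set (hi c w @ lo c w) = set w"
  by (auto simp: set_lo set_hi)

lemma consec_less: "consec S x y \<Longrightarrow> x < y" unfolding consec_def by simp

lemma succ_ex: "finite S \<Longrightarrow> c \<in> S \<Longrightarrow> \<exists>d\<in>S. c < d \<Longrightarrow> \<exists>y. consec S c y"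
proof -
  assume f: "finite S" and c: "c \<in> S" and e: "\<exists>d\<in>S. c < d"
  define y where "y = Min {d \<in> S. c < d}"
  have fy: "finite {d \<in> S. c < d}" using f by simp
  have ne: "{d \<in> S. c < d} \<noteq> {}" using e by auto
  have "y \<in> {d \<in> S. c < d}" unfolding y_def using Min_in[OF fy ne] .
  moreover have "\<forall>z\<in>S. c < z \<longrightarrow> y \<le> z" unfolding y_def using fy by auto
  ultimately have "consec S c y" unfolding consec_def using c by (auto simp: not_less)
  thus ?thesis by blast
qed

lemma inv_lohi_pt:
  assumes "consec (set w) x y" "c \<in> set w"
  shows "bef (lo c w @ hi c w) y x = (bef w y x \<and> x \<noteq> c)"
proof -
  have xy: "x < y" using assms(1) by (rule consec_less)
  have e: "(x \<le> c \<and> c < y) = (x = c)" using assms unfolding consec_def by (auto simp: not_less)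
  show ?thesis unfolding bef_lohi(1)[OF xy] using e by blast
qed

lemma inv_hilo_pt:
  assumes "consec (set w) x y" "c \<in> set w"
  shows "bef (hi c w @ lo c w) y x = (bef w y x \<or> x = c)"
proof -
  have xy: "x < y" using assms(1) by (rule consec_less)
  have "(x \<le> c \<and> c < y) = (x = c)" using assms unfolding consec_def by (auto simp: not_less)
  moreover have "x \<in> set w" "y \<in> set w" using assms(1) unfolding consec_def by auto
  ultimately show ?thesis using bef_lohi(2)[OF xy] by simp
qed

lemma inv_lohi:
  assumes c: "c \<in> set w"
  shows "InvW (lo c w @ hi c w) = InvW w - {c}"
proof (rule set_eqI)
  fix x
  show "x \<in> InvW (lo c w @ hi c w) \<longleftrightarrow> x \<in> InvW w - {c}"
  proof
    assume "x \<in> InvW (lo c w @ hi c w)"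
    then obtain y where y: "consec (set w) x y" "bef (lo c w @ hi c w) y x"
      unfolding InvW_def set_lohi by blast
    thus "x \<in> InvW w - {c}" unfolding InvW_def using inv_lohi_pt[OF y(1) c] by blast
  next
    assume "x \<in> InvW w - {c}"
    then obtain y where y: "consec (set w) x y" "bef w y x" "x \<noteq> c" unfolding InvW_def by blast
    thus "x \<in> InvW (lo c w @ hi c w)" unfolding InvW_def set_lohi using inv_lohi_pt[OF y(1) c] by blast
  qed
qed

lemma inv_hilo:
  assumes c: "c \<in> set w" and d: "\<exists>d\<in>set w. c < d"
  shows "InvW (hi c w @ lo c w) = insert c (InvW w)"
proof (rule set_eqI)
  fix x
  obtain y0 where y0: "consec (set w) c y0" using succ_ex[OF _ c d] by auto
  show "x \<in> InvW (hi c w @ lo c w) \<longleftrightarrow> x \<in> insert c (InvW w)"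
  proof
    assume "x \<in> InvW (hi c w @ lo c w)"
    then obtain y where y: "consec (set w) x y" "bef (hi c w @ lo c w) y x"
      unfolding InvW_def set_lohi by blast
    thus "x \<in> insert c (InvW w)" unfolding InvW_def using inv_hilo_pt[OF y(1) c] by blast
  next
    assume x: "x \<in> insert c (InvW w)"
    show "x \<in> InvW (hi c w @ lo c w)"
    proof (cases "x = c")
      case True
      thus ?thesis unfolding InvW_def set_lohi using inv_hilo_pt[OF y0 c] y0 by blast
    next
      case False
      then obtain y where y: "consec (set w) x y" "bef w y x" using x unfolding InvW_def by blast
      thus ?thesis unfolding InvW_def set_lohi using inv_hilo_pt[OF y(1) c] by blast
    qed
  qed
qed

lemma InvW_sub: "InvW w \<subseteq> {x \<in> set w. \<exists>d\<in>set w. x < d}"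
  unfolding InvW_def consec_def by auto

lemma finite_InvW: "finite (InvW w)"
  using InvW_sub by (rule finite_subset) simp

definition symd :: "nat set \<Rightarrow> nat set \<Rightarrow> nat set" where "symd X Y = (X - Y) \<union> (Y - X)"

lemma path:
  assumes "set u \<subseteq> A" "mset u = mset v"
  shows "(cshift A ^^ card (symd (InvW u) (InvW v))) (cls A u) (cls A v)"
  using assms
proof (induction "card (symd (InvW u) (InvW v))" arbitrary: u)
  case 0
  have fin: "finite (symd (InvW u) (InvW v))" unfolding symd_def using finite_InvW by simp
  have "InvW u = InvW v" using 0 fin unfolding symd_def by auto
  hence "sim u v" using 0 unfolding sim_def by simp
  hence "cls A u = cls A v" using cls_eq 0 by blast
  then show ?case using 0(1) by (metis relpowp_0_I)
next
  case (Suc m)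
  have fin: "finite (symd (InvW u) (InvW v))" unfolding symd_def using finite_InvW by simp
  obtain c where cD: "c \<in> symd (InvW u) (InvW v)" using Suc.hyps(2) by (metis card.empty ex_in_conv nat.simps(3))
  have su: "set u = set v" using Suc.prems by (metis set_mset_mset)
  have cin: "c \<in> set u \<and> (\<exists>d\<in>set u. c < d)"
    using cD InvW_sub[of u] InvW_sub[of v] su unfolding symd_def by auto
  define w' where "w' = (if c \<in> InvW u then lo c u @ hi c u else hi c u @ lo c u)"
  have Iw': "InvW w' = symd (InvW u) {c}"
    unfolding w'_def symd_def using inv_lohi[of c u] inv_hilo[of c u] cin by auto
  have mw': "mset w' = mset v" unfolding w'_def using mset_lohi Suc.prems by auto
  have sw': "set w' \<subseteq> A" using mw' Suc.prems su by (metis set_mset_mset)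
  have D': "symd (InvW w') (InvW v) = symd (InvW u) (InvW v) - {c}"
    using Iw' cD unfolding symd_def by auto
  have cm: "m = card (symd (InvW w') (InvW v))" using D' Suc.hyps(2) cD fin by simp
  have r: "(cshift A ^^ m) (cls A w') (cls A v)" using Suc.hyps(1)[OF cm sw' mw'] cm by simp
  have A: "set (lo c u) \<subseteq> A" "set (hi c u) \<subseteq> A" using Suc.prems unfolding set_lo set_hi by auto
  have step: "cshift A (cls A u) (cls A w')"
  proof (cases "c \<in> InvW u")
    case True
    have "InvW (hi c u @ lo c u) = InvW u" using inv_hilo[of c u] cin True by auto
    hence "sim u (hi c u @ lo c u)" unfolding sim_def using mset_lohi by simp
    hence "cls A u = cls A (hi c u @ lo c u)" using cls_eq Suc.prems by blast
    then show ?thesis using cshift_I[OF A(2) A(1)] True unfolding w'_def by simp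
  next
    case False
    have "InvW (lo c u @ hi c u) = InvW u" using inv_lohi[of c u] cin False by auto
    hence "sim u (lo c u @ hi c u)" unfolding sim_def using mset_lohi by simp
    hence "cls A u = cls A (lo c u @ hi c u)" using cls_eq Suc.prems by blast
    then show ?thesis using cshift_I[OF A(1) A(2)] False unfolding w'_def by simp
  qed
  show ?case using relpowp_Suc_I2[OF step r] Suc.hyps(2) by simp
qed

lemma card_symd:
  assumes "set u = set v" "u \<noteq> []"
  shows "card (symd (InvW u) (InvW v)) \<le> card (set u) - 1"
proof -
  have "symd (InvW u) (InvW v) \<subseteq> set u - {Max (set u)}"
  proof
    fix x assume "x \<in> symd (InvW u) (InvW v)"
    hence "x \<in> InvW u \<or> x \<in> InvW v" unfolding symd_def by auto
    hence "x \<in> set u \<and> (\<exists>d\<in>set u. x < d)" using InvW_sub[of u] InvW_sub[of v] assms(1) by auto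
    then obtain d where "x \<in> set u" "d \<in> set u" "x < d" by blast
    moreover have dM: "d \<le> Max (set u)" using \<open>d \<in> set u\<close> by simp
    ultimately have "x \<noteq> Max (set u)" by linarith
    thus "x \<in> set u - {Max (set u)}" using \<open>x \<in> set u\<close> by simp
  qed
  hence "card (symd (InvW u) (InvW v)) \<le> card (set u - {Max (set u)})"
    by (rule card_mono[rotated]) simp
  also have "\<dots> = card (set u) - 1"
  proof -
    have "set u \<noteq> {}" using assms(2) by simp
    hence "Max (set u) \<in> set u" by simp
    thus ?thesis by (rule card_Diff_singleton)
  qed
  finally show ?thesis .
qed

lemma rt_inv:
  assumes "(cshift A)\<^sup>*\<^sup>* s t"
  shows "set u \<subseteq> A \<Longrightarrow> s = cls A u \<Longrightarrow> \<exists>v. set v \<subseteq> A \<and> t = cls A v \<and> mset v = mset u"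
  using assms
proof (induction rule: rtranclp_induct)
  case base then show ?case by blast
next
  case (step t t')
  obtain v where v: "set v \<subseteq> A" "t = cls A v" "mset v = mset u" using step.IH step.prems by blast
  obtain x y where xy: "set x \<subseteq> A" "set y \<subseteq> A" "t = cls A (x @ y)" "t' = cls A (y @ x)"
    using cshift_D[OF step(2)] by blast
  have "sim v (x @ y)" using cls_eq_iff[of v A "x @ y"] v xy by auto
  hence "mset (y @ x) = mset u" using v unfolding sim_def by (simp add: union_commute)
  thus ?case using xy by (intro exI[of _ "y @ x"]) auto
qed

lemma part1:
  assumes s: "s \<in> Mon A" and t: "t \<in> Mon A"
  shows "(cshift A)\<^sup>*\<^sup>* s t \<longleftrightarrow> ev_equiv s t"
proof -
  obtain u where u: "set u \<subseteq> A" "s = cls A u" using s Mon_iff by blast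
  obtain v where v: "set v \<subseteq> A" "t = cls A v" using t Mon_iff by blast
  show ?thesis
  proof
    assume "(cshift A)\<^sup>*\<^sup>* s t"
    then obtain v' where v': "set v' \<subseteq> A" "t = cls A v'" "mset v' = mset u" using rt_inv u by blast
    have "sim v v'" using cls_eq_iff[of v A v'] v v' by simp
    hence "mset u = mset v" using v' unfolding sim_def by simp
    thus "ev_equiv s t" using ev_equiv_cls u v by blast
  next
    assume "ev_equiv s t"
    hence "mset u = mset v" using ev_equiv_cls u v by blast
    thus "(cshift A)\<^sup>*\<^sup>* s t" using path[OF u(1)] u v relpowp_imp_rtranclp by metis
  qed
qed


lemma card_filter_sum:
  assumes "finite A" shows "card {i \<in> A. P i} = (\<Sum>i\<in>A. if P i then 1 else 0)"
proof -
  have "(\<Sum>i\<in>{i\<in>A. P i}. (1::nat)) = (\<Sum>i\<in>A. if P i then 1 else 0)"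
    by (rule sum.inter_filter[OF assms])
  thus ?thesis by simp
qed
lemma count_steps:
  fixes S :: "nat set"
  assumes "1 \<le> n"
  shows "(\<Sum>i\<in>{1..<n}. if i \<in> S \<and> Suc i \<notin> S then 1 else 0) + (if n \<in> S then 1 else 0)
       = (\<Sum>i\<in>{1..<n}. if i \<notin> S \<and> Suc i \<in> S then 1 else (0::nat)) + (if 1 \<in> S then 1 else 0)"
  using assms
proof (induction n rule: nat_induct_at_least)
  case base then show ?case by simp
next
  case (Suc n)
  have e1: "(\<Sum>i\<in>{1..<Suc n}. if i \<in> S \<and> Suc i \<notin> S then 1 else (0::nat))
      = (\<Sum>i\<in>{1..<n}. if i \<in> S \<and> Suc i \<notin> S then 1 else 0) + (if n \<in> S \<and> Suc n \<notin> S then 1 else 0)"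
    using Suc.hyps by (simp add: sum.atLeastLessThan_Suc)
  have e2: "(\<Sum>i\<in>{1..<Suc n}. if i \<notin> S \<and> Suc i \<in> S then 1 else (0::nat))
      = (\<Sum>i\<in>{1..<n}. if i \<notin> S \<and> Suc i \<in> S then 1 else 0) + (if n \<notin> S \<and> Suc n \<in> S then 1 else 0)"
    using Suc.hyps by (simp add: sum.atLeastLessThan_Suc)
  show ?case using Suc.IH unfolding e1 e2 by (auto split: if_splits)
qed
lemma count_steps_le:
  fixes S :: "nat set"
  shows "card {i \<in> {1..<n}. i \<in> S \<and> Suc i \<notin> S} \<le> card {i \<in> {1..<n}. i \<notin> S \<and> Suc i \<in> S} + 1"
proof (cases "1 \<le> n")
  case True
  show ?thesis unfolding card_filter_sum[OF finite_atLeastLessThan]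
    using count_steps[OF True, of S] by (auto split: if_splits)
next
  case False
  then show ?thesis by simp
qed
lemma set_std: "set [1..<Suc n] = {1..n}" by auto

lemma consec_std: "consec {1..n} x y \<longleftrightarrow> 1 \<le> x \<and> y = Suc x \<and> y \<le> n"
proof
  assume c: "consec {1..n} x y"
  hence xy: "x \<in> {1..n}" "y \<in> {1..n}" "x < y" "\<forall>z\<in>{1..n}. \<not> (x < z \<and> z < y)"
    unfolding consec_def by auto
  have "y = Suc x"
  proof (rule ccontr)
    assume "y \<noteq> Suc x"
    hence "Suc x < y" using xy(3) by simp
    moreover have "Suc x \<in> {1..n}" using xy calculation by auto
    ultimately show False using xy(4) by auto
  qed
  thus "1 \<le> x \<and> y = Suc x \<and> y \<le> n" using xy by auto
next
  assume "1 \<le> x \<and> y = Suc x \<and> y \<le> n"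
  thus "consec {1..n} x y" unfolding consec_def by auto
qed

lemma InvW_std_form:
  assumes "set w = {1..n}"
  shows "InvW w = {i \<in> {1..<n}. bef w (Suc i) i}"
  unfolding InvW_def assms consec_std by auto

lemma bef_upt: "bef [m..<k] a b \<longleftrightarrow> m \<le> a \<and> a < b \<and> b < k"
  by (induction k) auto

lemma bef_rev: "bef (rev xs) a b = bef xs b a"
  by (induction xs) auto

lemma InvW_std: "InvW [1..<Suc n] = {}"
  unfolding InvW_std_form[OF set_std] bef_upt by auto

lemma InvW_rstd: "InvW (rev [1..<Suc n]) = {1..<n}"
proof -
  have "set (rev [1..<Suc n]) = {1..n}" by auto
  thus ?thesis unfolding InvW_std_form[OF \<open>set (rev [1..<Suc n]) = {1..n}\<close>] bef_rev bef_upt by auto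
qed
lemma perm_step:
  assumes m: "mset (x @ y) = mset [1..<Suc n]"
  shows "card (InvW (y @ x)) \<le> card (InvW (x @ y)) + 1"
proof -
  have dis: "distinct (x @ y)" using mset_eq_imp_distinct_iff[OF m] by simp
  hence dj: "set x \<inter> set y = {}" by simp
  have sxy: "set (x @ y) = {1..n}" using m set_std by (metis set_mset_mset)
  have syx: "set (y @ x) = {1..n}" using sxy by auto
  define S where "S = set x"
  define I1 where "I1 = InvW (x @ y)"
  define I2 where "I2 = InvW (y @ x)"
  define Dn where "Dn = {i \<in> {1..<n}. i \<in> S \<and> Suc i \<notin> S}"
  define Up where "Up = {i \<in> {1..<n}. i \<notin> S \<and> Suc i \<in> S}"
  have I1f: "I1 = {i \<in> {1..<n}. bef (x @ y) (Suc i) i}" unfolding I1_def by (rule InvW_std_form[OF sxy])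
  have I2f: "I2 = {i \<in> {1..<n}. bef (y @ x) (Suc i) i}" unfolding I2_def by (rule InvW_std_form[OF syx])
  have inS: "\<And>i. i \<in> {1..n} \<Longrightarrow> i \<notin> S \<Longrightarrow> i \<in> set y" using sxy unfolding S_def by auto
  have sub1: "I2 \<subseteq> (I1 - Up) \<union> Dn"
  proof
    fix i assume "i \<in> I2"
    hence i: "i \<in> {1..<n}" "bef (y @ x) (Suc i) i" unfolding I2f by auto
    show "i \<in> (I1 - Up) \<union> Dn"
    proof (cases "bef y (Suc i) i \<or> bef x (Suc i) i")
      case True
      hence "i \<in> I1" unfolding I1f using i(1) by auto
      moreover have "i \<notin> Up"
      proof
        assume "i \<in> Up"
        hence "i \<notin> set x" "Suc i \<in> set x" unfolding Up_def S_def by auto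
        hence "Suc i \<notin> set y" using dj by auto
        thus False using True \<open>i \<notin> set x\<close> by (auto dest: bef_in)
      qed
      ultimately show ?thesis by simp
    next
      case False
      hence "Suc i \<in> set y" "i \<in> set x" using i(2) by auto
      hence "i \<in> Dn" unfolding Dn_def S_def using dj i(1) by auto
      thus ?thesis by simp
    qed
  qed
  have sub2: "Up \<subseteq> I1"
  proof
    fix i assume "i \<in> Up"
    hence i: "i \<in> {1..<n}" "i \<notin> S" "Suc i \<in> S" unfolding Up_def by auto
    have "i \<in> set y" using inS i by auto
    thus "i \<in> I1" unfolding I1f using i unfolding S_def by auto
  qed
  have fin: "finite I1" "finite Dn" "finite Up" unfolding I1_def Dn_def Up_def by (auto simp: finite_InvW)
  have "card I2 \<le> card ((I1 - Up) \<union> Dn)" using sub1 by (rule card_mono[rotated]) (use fin in simp)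
  also have "\<dots> \<le> card (I1 - Up) + card Dn" by (rule card_Un_le)
  also have "card (I1 - Up) = card I1 - card Up" using sub2 fin by (simp add: card_Diff_subset)
  also have "card Dn \<le> card Up + 1" unfolding Dn_def Up_def by (rule count_steps_le)
  finally have "card I2 \<le> card I1 - card Up + (card Up + 1)" by simp
  moreover have "card Up \<le> card I1" using sub2 fin by (simp add: card_mono)
  ultimately show ?thesis unfolding I1_def I2_def by simp
qed



lemma kdist_le: "(cshift A ^^ k) s t \<Longrightarrow> kdist A s t \<le> k"
  unfolding kdist_def by (rule Least_le)

lemma comp_elem: "C \<in> components A \<Longrightarrow> \<exists>s0. s0 \<in> Mon A \<and> C = {t \<in> Mon A. (cshift A)\<^sup>*\<^sup>* s0 t}"
  unfolding components_def by blast

lemma card_set_le: "set u \<subseteq> {1..n} \<Longrightarrow> card (set u) \<le> n"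
  using card_mono[of "{1..n}" "set u"] by simp

lemma upper_pair:
  assumes C: "C \<in> components {1..n}" and s: "s \<in> C" and t: "t \<in> C"
  shows "kdist {1..n} s t \<le> n - 1"
proof -
  obtain s0 where s0: "s0 \<in> Mon {1..n}" "C = {t \<in> Mon {1..n}. (cshift {1..n})\<^sup>*\<^sup>* s0 t}"
    using comp_elem[OF C] by blast
  obtain u0 where u0: "set u0 \<subseteq> {1..n}" "s0 = cls {1..n} u0" using s0 Mon_iff by blast
  have rs: "(cshift {1..n})\<^sup>*\<^sup>* s0 s" using s s0(2) by simp
  have rt: "(cshift {1..n})\<^sup>*\<^sup>* s0 t" using t s0(2) by simp
  obtain u where u: "set u \<subseteq> {1..n}" "s = cls {1..n} u" "mset u = mset u0"
    using rt_inv[OF rs u0(1) u0(2)] by blast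
  obtain v where v: "set v \<subseteq> {1..n}" "t = cls {1..n} v" "mset v = mset u0"
    using rt_inv[OF rt u0(1) u0(2)] by blast
  have muv: "mset u = mset v" using u v by simp
  have p: "(cshift {1..n} ^^ card (symd (InvW u) (InvW v))) s t" using path[OF u(1) muv] u v by simp
  have "card (symd (InvW u) (InvW v)) \<le> n - 1"
  proof (cases "u = []")
    case True
    hence "v = []" using muv by simp
    then show ?thesis using True by (simp add: symd_def)
  next
    case False
    have "set u = set v" using muv by (metis set_mset_mset)
    hence "card (symd (InvW u) (InvW v)) \<le> card (set u) - 1" using card_symd False by blast
    also have "\<dots> \<le> n - 1" using card_set_le[OF u(1)] by simp
    finally show ?thesis .
  qed
  thus ?thesis using kdist_le[OF p] by simp
qed

lemma upper_diam: "C \<in> components {1..n} \<Longrightarrow> diam {1..n} C \<le> enat (n - 1)"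
  unfolding diam_def
proof (rule SUP_least)
  fix p assume C: "C \<in> components {1..n}" and p: "p \<in> C \<times> C"
  obtain a b where ab: "p = (a, b)" "a \<in> C" "b \<in> C" using p by auto
  have "kdist {1..n} a b \<le> n - 1" by (rule upper_pair[OF C ab(2) ab(3)])
  thus "enat (kdist {1..n} (fst p) (snd p)) \<le> enat (n - 1)" using ab(1) by simp
qed

lemma inv_walk:
  assumes "(cshift A ^^ k) s t" "set u \<subseteq> A" "s = cls A u" "mset u = mset [1..<Suc n]"
  shows "\<exists>v. set v \<subseteq> A \<and> t = cls A v \<and> mset v = mset u \<and> card (InvW v) \<le> card (InvW u) + k"
  using assms(1)
proof (induction k arbitrary: t)
  case 0
  then show ?case using assms(2,3) by auto
next
  case (Suc k)
  obtain t1 where t1: "(cshift A ^^ k) s t1" "cshift A t1 t" using Suc.prems by (rule relpowp_Suc_E)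
  obtain v1 where v1: "set v1 \<subseteq> A" "t1 = cls A v1" "mset v1 = mset u" "card (InvW v1) \<le> card (InvW u) + k"
    using Suc.IH[OF t1(1)] by blast
  obtain x y where xy: "set x \<subseteq> A" "set y \<subseteq> A" "t1 = cls A (x @ y)" "t = cls A (y @ x)"
    using cshift_D[OF t1(2)] by blast
  have sv: "sim v1 (x @ y)" using cls_eq_iff[of v1 A "x @ y"] v1 xy by auto
  have mxy: "mset (x @ y) = mset [1..<Suc n]" using sv v1 assms(4) unfolding sim_def by simp
  have c: "card (InvW (y @ x)) \<le> card (InvW (x @ y)) + 1" by (rule perm_step[OF mxy])
  have i: "InvW (x @ y) = InvW v1" using sv unfolding sim_def by simp
  have m: "mset (y @ x) = mset u" using mxy assms(4) by (simp add: union_commute)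
  show ?case using xy v1 c i m by (intro exI[of _ "y @ x"]) auto
qed

lemma lower:
  "kdist {1..n} (cls {1..n} [1..<Suc n]) (cls {1..n} (rev [1..<Suc n])) \<ge> n - 1"
proof -
  let ?A = "{1..n::nat}"
  let ?s0 = "cls ?A [1..<Suc n]"
  let ?t0 = "cls ?A (rev [1..<Suc n])"
  have s1: "set [1..<Suc n] \<subseteq> ?A" by auto
  have s2: "set (rev [1..<Suc n]) \<subseteq> ?A" by auto
  have m: "mset [1..<Suc n] = mset (rev [1..<Suc n])" by simp
  have ex: "\<exists>k. (cshift ?A ^^ k) ?s0 ?t0" using path[OF s1 m] by blast
  have kk: "(cshift ?A ^^ kdist ?A ?s0 ?t0) ?s0 ?t0" unfolding kdist_def by (rule LeastI_ex[OF ex])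
  obtain v where v: "set v \<subseteq> ?A" "?t0 = cls ?A v" "mset v = mset [1..<Suc n]"
    "card (InvW v) \<le> card (InvW [1..<Suc n]) + kdist ?A ?s0 ?t0"
    using inv_walk[OF kk s1 refl refl] by blast
  have "sim (rev [1..<Suc n]) v" using cls_eq_iff[OF s2 v(1)] v(2) by simp
  hence "InvW v = {1..<n}" using InvW_rstd unfolding sim_def by simp
  thus ?thesis using v(4) InvW_std by simp
qed

lemma dist_exact:
  "kdist {1..n} (cls {1..n} [1..<Suc n]) (cls {1..n} (rev [1..<Suc n])) = n - 1"
  and comp0: "{t \<in> Mon {1..n}. (cshift {1..n})\<^sup>*\<^sup>* (cls {1..n} [1..<Suc n]) t} \<in> components {1..n}"
  and diam0: "diam {1..n} {t \<in> Mon {1..n}. (cshift {1..n})\<^sup>*\<^sup>* (cls {1..n} [1..<Suc n]) t} = enat (n - 1)"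
proof -
  let ?A = "{1..n::nat}"
  let ?s0 = "cls ?A [1..<Suc n]"
  let ?t0 = "cls ?A (rev [1..<Suc n])"
  let ?C = "{t \<in> Mon ?A. (cshift ?A)\<^sup>*\<^sup>* ?s0 t}"
  have s1: "set [1..<Suc n] \<subseteq> ?A" by auto
  have s2: "set (rev [1..<Suc n]) \<subseteq> ?A" by auto
  have ms: "?s0 \<in> Mon ?A" using s1 Mon_iff by blast
  have mt: "?t0 \<in> Mon ?A" using s2 Mon_iff by blast
  show c: "?C \<in> components ?A" unfolding components_def using ms by blast
  have "ev_equiv ?s0 ?t0" using ev_equiv_cls[OF s1 s2] by simp
  hence "(cshift ?A)\<^sup>*\<^sup>* ?s0 ?t0" using part1[OF ms mt] by simp
  hence t0C: "?t0 \<in> ?C" using mt by simp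
  have s0C: "?s0 \<in> ?C" using ms by simp
  have le: "kdist ?A ?s0 ?t0 \<le> n - 1" by (rule upper_pair[OF c s0C t0C])
  show d: "kdist ?A ?s0 ?t0 = n - 1" using le lower[of n] by simp
  have "enat (kdist ?A ?s0 ?t0) \<le> diam ?A ?C"
    unfolding diam_def using s0C t0C by (intro SUP_upper2[of "(?s0, ?t0)"]) auto
  moreover have "diam ?A ?C \<le> enat (n - 1)" by (rule upper_diam[OF c])
  ultimately show "diam ?A ?C = enat (n - 1)" using d by simp
qed

theorem mainTheorem1:
  shows "(\<forall>s\<in>Mon posAlph. \<forall>t\<in>Mon posAlph.
            (cshift posAlph)\<^sup>*\<^sup>* s t \<longleftrightarrow> ev_equiv s t)
       \<and> (\<forall>n::nat. n \<ge> 1 \<longrightarrow>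
            (\<forall>C\<in>components {1..n}. diam {1..n} C \<le> enat (n - 1))
          \<and> (\<exists>C\<in>components {1..n}. diam {1..n} C = enat (n - 1))
          \<and> (SUP C\<in>components {1..n}. diam {1..n} C) = enat (n - 1))"
proof (intro conjI)
  show "\<forall>s\<in>Mon posAlph. \<forall>t\<in>Mon posAlph. (cshift posAlph)\<^sup>*\<^sup>* s t \<longleftrightarrow> ev_equiv s t"
  proof (intro ballI)
    fix s t assume s: "s \<in> Mon posAlph" and t: "t \<in> Mon posAlph"
    show "(cshift posAlph)\<^sup>*\<^sup>* s t \<longleftrightarrow> ev_equiv s t" by (rule part1[OF s t])
  qed
  show "\<forall>n::nat. n \<ge> 1 \<longrightarrow>
            (\<forall>C\<in>components {1..n}. diam {1..n} C \<le> enat (n - 1))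
          \<and> (\<exists>C\<in>components {1..n}. diam {1..n} C = enat (n - 1))
          \<and> (SUP C\<in>components {1..n}. diam {1..n} C) = enat (n - 1)"
  proof (intro allI impI conjI)
    fix n :: nat assume "n \<ge> 1"
    show "\<forall>C\<in>components {1..n}. diam {1..n} C \<le> enat (n - 1)"
    proof
      fix C assume "C \<in> components {1..n}"
      thus "diam {1..n} C \<le> enat (n - 1)" by (rule upper_diam)
    qed
    show "\<exists>C\<in>components {1..n}. diam {1..n} C = enat (n - 1)"
      by (rule bexI[of "\<lambda>C. diam {1..n} C = enat (n - 1)", OF diam0[of n] comp0[of n]])
    show "(SUP C\<in>components {1..n}. diam {1..n} C) = enat (n - 1)"
    proof (rule antisym)
      show "(SUP C\<in>components {1..n}. diam {1..n} C) \<le> enat (n - 1)"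
        by (rule SUP_least, rule upper_diam)
      have "diam {1..n} {t \<in> Mon {1..n}. (cshift {1..n})\<^sup>*\<^sup>* (cls {1..n} [1..<Suc n]) t}
            \<le> (SUP C\<in>components {1..n}. diam {1..n} C)" by (rule SUP_upper[OF comp0])
      thus "enat (n - 1) \<le> (SUP C\<in>components {1..n}. diam {1..n} C)" unfolding diam0 .
    qed
  qed
qed


end
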